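(* For $R\in\mathbb{R}_+$, let $p,p'\in\mathbb{R}^2$ satisfy $\|p-p'\|\le R$. Then the area $A$ of $B_R(p')\cap B_R^c(p)$ satisfies $A\le\frac{2\sqrt3+3}{3}R\,\|p-p'\|$.
   Context: $B_R(p)$ is the closed Euclidean ball in $\mathbb{R}^2$ of radius $R$ centered at $p$, and $B_R^c(p)$ its complement; area means Lebesgue measure. *)

theory Defs
  imports "HOL-Analysis.Analysis"
begin

end

theory Submission
  imports Defs
begin

lemma vn_der[derivative_intros]: "((\<lambda>x::real^'n. x$i) has_derivative (\<lambda>w. w$i)) F"
  by (simp add: bounded_linear_imp_has_derivative bounded_linear_vec_nth)

lemma dist2: "dist (x::real^2) y = sqrt ((x$1-y$1)^2 + (x$2-y$2)^2)"
  by (simp add: dist_vec_def L2_set_def sum_2 dist_real_def)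

theorem lemmaB1:
  fixes p p' :: "real ^ 2" and R :: real
  assumes "R > 0" and "dist p p' \<le> R"
  shows "measure lebesgue (cball p' R \<inter> - cball p R)
           \<le> (2 * sqrt 3 + 3) / 3 * R * dist p p'"
proof -
  define d where "d = dist p p'"
  have s3: "3/2 \<le> sqrt (3::real)" by (rule real_le_rsqrt) (simp add: power2_eq_square)
  have cge: "2 \<le> (2 * sqrt 3 + 3) / (3::real)" using s3 by simp
  show ?thesis
  proof (cases "d = 0")
    case True
    then have "p = p'" by (simp add: d_def)
    then have "cball p' R \<inter> - cball p R = {}" by auto
    then show ?thesis using True by (simp add: d_def)
  next
    case False
    then have dpos: "d > 0" using d_def by simp
    have d2: "d^2 = (p'$1-p$1)^2 + (p'$2-p$2)^2"
      by (simp add: d_def dist2 power2_commute)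
    define u :: "real^2" where "u = (1/d) *\<^sub>R (p' - p)"
    define v :: "real^2" where "v = vector[-(u$2), u$1]"
    have u1: "u$1 = (p'$1-p$1)/d" and u2: "u$2 = (p'$2-p$2)/d" by (simp_all add: u_def)
    have "(u$1)^2 + (u$2)^2 = ((p'$1-p$1)^2 + (p'$2-p$2)^2)/d^2"
      by (simp add: u1 u2 power_divide add_divide_distrib)
    then have nu: "(u$1)^2 + (u$2)^2 = 1"
      using dpos by (simp add: d2[symmetric])
    have pp': "p'$1 = p$1 + d * u$1" "p'$2 = p$2 + d * u$2" using dpos by (simp_all add: u1 u2)
    define h where "h t = sqrt (R^2 - t^2)" for t
    define phi where "phi x = p + (h (x$1) + x$2) *\<^sub>R u + (x$1) *\<^sub>R v" for x :: "real^2"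
    define f' where "f' x = (\<lambda>w::real^2. (-(x$1) / h (x$1) * w$1 + w$2) *\<^sub>R u + (w$1) *\<^sub>R v)" for x :: "real^2"
    define A where "A = {x::real^2. -R < x$1 \<and> x$1 < R}"
    define B where "B = {x::real^2. 0 \<le> x$2 \<and> x$2 \<le> d}"
    define D where "D = A \<inter> B"
    have "open A" unfolding A_def by (intro open_Collect_conj open_Collect_less continuous_intros)
    moreover have "closed B" unfolding B_def by (intro closed_Collect_conj closed_Collect_le continuous_intros)
    ultimately have Dsets: "D \<in> sets lebesgue" unfolding D_def by (simp add: sets.Int borel_open borel_closed)
    have Dsub: "D \<subseteq> cbox (vector[-R,0]) (vector[R,d])"
      by (auto simp: D_def A_def B_def mem_box_cart forall_2)
    have Dfm: "D \<in> lmeasurable" by (rule fmeasurableI2[OF lmeasurable_cbox Dsub Dsets])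
    have mD: "measure lebesgue D \<le> 2 * R * d"
    proof -
      have m1: "measure lebesgue D \<le> measure lebesgue (cbox (vector[-R,0]) (vector[R,d]) :: (real^2) set)"
        by (rule measure_mono_fmeasurable[OF Dsub Dsets lmeasurable_cbox])
      have "(vector[-R,0]::real^2) \<in> cbox (vector[-R,0]) (vector[R,d])"
        using assms dpos by (simp add: mem_box_cart forall_2)
      then have ne: "cbox (vector[-R,0]) (vector[R,d::real]) \<noteq> ({}::(real^2) set)" by blast
      have "measure lebesgue (cbox (vector[-R,0]) (vector[R,d]) :: (real^2) set) = 2 * R * d"
        using content_cbox_cart[OF ne] by (simp add: UNIV_2)
      then show ?thesis using m1 by linarith
    qed
    have deriv: "(phi has_derivative f' x) (at x within D)" if "x \<in> D" for x
    proof -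
      from that have "\<bar>x$1\<bar> < R" by (auto simp: D_def A_def)
      then have "\<bar>x$1\<bar>^2 < R^2" by (intro power_strict_mono) auto
      then have pos: "R\<^sup>2 - (x$1)\<^sup>2 > 0" by simp
      have "(phi has_derivative f' x) (at x)"
        unfolding phi_def f'_def h_def
        using pos
        apply (auto intro!: derivative_eq_intros)[1]
        apply (auto simp: fun_eq_iff algebra_simps divide_inverse)
        done
      then show ?thesis by (rule has_derivative_at_withinI)
    qed
    have detf: "det (matrix (f' x)) = -1" for x
    proof -
      have "det (matrix (f' x)) = - ((u$1)^2 + (u$2)^2)"
        by (simp add: det_2 matrix_def f'_def v_def axis_def algebra_simps power2_eq_square)
      then show ?thesis using nu by simp
    qed
    have int: "(\<lambda>x. \<bar>det (matrix (f' x))\<bar>) integrable_on D"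
      using detf integrable_on_const[OF Dfm] by simp
    have phim: "phi ` D \<in> lmeasurable"
      by (rule measurable_differentiable_image[OF Dsets deriv int])
    have mphi: "measure lebesgue (phi ` D) \<le> 2 * R * d"
    proof -
      have "measure lebesgue (phi ` D) \<le> integral D (\<lambda>x. \<bar>det (matrix (f' x))\<bar>)"
        by (rule measure_differentiable_image[OF Dsets deriv int])
      also have "\<dots> = measure lebesgue D" using detf lmeasure_integral[OF Dfm] by simp
      finally show ?thesis using mD by linarith
    qed
    define F where "F = {p' + R *\<^sub>R v, p' - R *\<^sub>R v}"
    have Fnull: "F \<in> null_sets lebesgue"
      using negligible_iff_null_sets negligible_finite unfolding F_def by blast
    define S where "S = cball p' R \<inter> - cball p R"
    have Ssets: "S \<in> sets lebesgue"
      unfolding S_def by (simp add: sets.Int borel_open borel_closed)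
    have cover: "S \<subseteq> phi ` D \<union> F"
    proof
      fix x assume "x \<in> S"
      then have xin: "(p'$1-x$1)^2 + (p'$2-x$2)^2 \<le> R^2" and xout: "(p$1-x$1)^2 + (p$2-x$2)^2 > R^2"
      proof -
        from \<open>x \<in> S\<close> have "dist p' x \<le> R" "\<not> dist p x \<le> R" by (auto simp: S_def)
        then have 1: "sqrt ((p'$1-x$1)^2 + (p'$2-x$2)^2) \<le> R" and 2: "\<not> sqrt ((p$1-x$1)^2 + (p$2-x$2)^2) \<le> R"
          by (simp_all add: dist2)
        from 1 show "(p'$1-x$1)^2 + (p'$2-x$2)^2 \<le> R^2" by (rule sqrt_le_D)
        show "(p$1-x$1)^2 + (p$2-x$2)^2 > R^2"
        proof (rule ccontr)
          assume "\<not> ?thesis"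
          then have "sqrt ((p$1-x$1)^2 + (p$2-x$2)^2) \<le> R" using assms by (intro real_le_lsqrt) auto
          with 2 show False by simp
        qed
      qed
      define a where "a = (x$1-p$1)*u$1 + (x$2-p$2)*u$2"
      define b where "b = (x$2-p$2)*u$1 - (x$1-p$1)*u$2"
      have c1: "a*u$1 - b*u$2 = (x$1-p$1)*((u$1)^2+(u$2)^2)"
        unfolding a_def b_def power2_eq_square by algebra
      have c2: "a*u$2 + b*u$1 = (x$2-p$2)*((u$1)^2+(u$2)^2)"
        unfolding a_def b_def power2_eq_square by algebra
      have xab: "x = p + a *\<^sub>R u + b *\<^sub>R v"
        using c1 c2 nu by (simp add: vec_eq_iff forall_2 v_def algebra_simps)
      have e1: "(p$1-x$1)^2 + (p$2-x$2)^2 = a^2 + b^2"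
      proof -
        have "a^2 + b^2 = ((p$1-x$1)^2 + (p$2-x$2)^2) * ((u$1)^2+(u$2)^2)"
          unfolding a_def b_def power2_eq_square by algebra
        then show ?thesis using nu by simp
      qed
      have e2: "(p'$1-x$1)^2 + (p'$2-x$2)^2 = (a-d)^2 + b^2"
      proof -
        have "(a - d*((u$1)^2+(u$2)^2))^2 + b^2 = ((p$1+d*u$1-x$1)^2 + (p$2+d*u$2-x$2)^2) * ((u$1)^2+(u$2)^2)"
          unfolding a_def b_def power2_eq_square by algebra
        then show ?thesis using nu pp' by simp
      qed
      have p'v: "p' = p + d *\<^sub>R u" using pp' by (simp add: vec_eq_iff forall_2)
      have ad: "(a-d)^2 + b^2 \<le> R^2" using xin e2 by simp
      have ab: "a^2 + b^2 > R^2" using xout e1 by simp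
      have bR: "b^2 \<le> R^2" using ad by (smt (verit) zero_le_power2)
      show "x \<in> phi ` D \<union> F"
      proof (cases "b^2 = R^2")
        case True
        then have "(a-d)^2 \<le> 0" using ad by simp
        then have "a = d" by simp
        from True have "b = R \<or> b = -R" by (simp add: power2_eq_iff)
        then have "x \<in> F" using xab p'v \<open>a = d\<close> by (auto simp: F_def)
        then show ?thesis by simp
      next
        case False
        then have bl: "b^2 < R^2" using bR by simp
        have "sqrt (b^2) < sqrt (R^2)" using bl by (simp only: real_sqrt_less_iff)
        then have "\<bar>b\<bar> < R" using assms by simp
        then have b1: "-R < b" "b < R" by auto
        define hb where "hb = h b"
        have hb0: "0 \<le> hb" using bR by (simp add: hb_def h_def)
        have "hb < \<bar>a\<bar>" unfolding hb_def h_def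
          using ab by (intro real_less_lsqrt) auto
        moreover have "\<bar>a-d\<bar> \<le> hb" unfolding hb_def h_def
          using ad by (intro real_le_rsqrt) auto
        ultimately have a1: "hb < a" and a2: "a - d \<le> hb" using dpos hb0 by (auto simp: abs_if split: if_splits)
        define z :: "real^2" where "z = vector[b, a - hb]"
        have "z \<in> D" using b1 a1 a2 by (simp add: z_def D_def A_def B_def)
        moreover have "phi z = x" using xab by (simp add: z_def phi_def hb_def)
        ultimately show ?thesis by blast
      qed
    qed
    have "phi ` D \<union> F \<in> lmeasurable"
      using phim Fnull by (simp add: fmeasurable.Un fmeasurableI_null_sets)
    then have "measure lebesgue S \<le> measure lebesgue (phi ` D \<union> F)"
      by (rule measure_mono_fmeasurable[OF cover Ssets])
    also have "\<dots> = measure lebesgue (phi ` D)"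
      using phim Fnull by (simp add: measure_Un_null_set)
    finally have "measure lebesgue S \<le> 2 * R * d" using mphi by linarith
    also have "\<dots> \<le> (2 * sqrt 3 + 3) / 3 * R * d"
      using cge assms dpos by (intro mult_right_mono) auto
    finally show ?thesis by (simp add: S_def d_def)
  qed
qed

end
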